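(* Let $E\in M_n(\mathbb{FT})$ be an idempotent of rank $n$, and regard $C(E)$ as a subset of $\mathbb{R}^n$ with the usual topology. Then for every $x\in\mathbb{R}^n\setminus C(E)$, the point $E\otimes x$ lies on the (topological) boundary of $C(E)$.
   Context: $\mathbb{FT}$ is $\mathbb{R}$ with $a\oplus b=\max(a,b)$, $a\otimes b=a+b$; $M_n(\mathbb{FT})$ is the semigroup of real $n\times n$ matrices acting on $\mathbb{R}^n$ by $(E\otimes x)_i=\max_k(E_{i,k}+x_k)$, and multiplied analogously. $C(E)$ is the set of finite componentwise maxima of columns of $E$ shifted by real constants; the rank of an idempotent $E$ is the minimal cardinality of a generating set of $C(E)$. *)

theory Defs
  imports "HOL-Analysis.Analysis"
begin

text \<open>Max-plus (full tropical) matrices of size n x n, with n given by the finite index type 'n.\<close>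

definition trop_mult :: "real^'n::finite^'n \<Rightarrow> real^'n^'n \<Rightarrow> real^'n^'n" where
  "trop_mult E F = (\<chi> i j. Max ((\<lambda>k. E$i$k + F$k$j) ` UNIV))"

definition trop_act :: "real^'n::finite^'n \<Rightarrow> real^'n \<Rightarrow> real^'n" where
  "trop_act E x = (\<chi> i. Max ((\<lambda>k. E$i$k + x$k) ` UNIV))"

definition trop_idempotent :: "real^'n::finite^'n \<Rightarrow> bool" where
  "trop_idempotent E \<longleftrightarrow> trop_mult E E = E"

definition trop_span :: "(real^'n::finite) set \<Rightarrow> (real^'n) set" where
  "trop_span G = {v. \<exists>F c. finite F \<and> F \<noteq> {} \<and> F \<subseteq> G \<and>
                      v = (\<chi> i. Max ((\<lambda>g. c g + g$i) ` F))}"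

definition trop_column :: "real^'n::finite^'n \<Rightarrow> 'n \<Rightarrow> real^'n" where
  "trop_column E j = (\<chi> i. E$i$j)"

definition trop_colspace :: "real^'n::finite^'n \<Rightarrow> (real^'n) set" where
  "trop_colspace E = trop_span (range (trop_column E))"

definition trop_rank :: "real^'n::finite^'n \<Rightarrow> nat" where
  "trop_rank E = (LEAST k. \<exists>G. finite G \<and> card G = k \<and> trop_span G = trop_colspace E)"

end

theory Submission
  imports Defs
begin

lemma act_nth: "trop_act E x $ i = Max ((\<lambda>k. E$i$k + x$k) ` UNIV)"
  by (simp add: trop_act_def)

lemma idem_nth:
  assumes "trop_idempotent E"
  shows "E$i$j = Max ((\<lambda>k. E$i$k + E$k$j) ` UNIV)"
proof -
  have "trop_mult E E $ i $ j = E $ i $ j" using assms by (simp add: trop_idempotent_def)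
  thus ?thesis by (simp add: trop_mult_def)
qed

lemma idem_le:
  assumes "trop_idempotent E"
  shows "E$i$k + E$k$j \<le> E$i$j"
  unfolding idem_nth[OF assms, of i j] by (rule Max_ge) auto

lemma idem_ex:
  assumes "trop_idempotent E"
  shows "\<exists>k. E$i$j = E$i$k + E$k$j"
proof -
  have "Max ((\<lambda>k. E$i$k + E$k$j) ` UNIV) \<in> (\<lambda>k. E$i$k + E$k$j) ` UNIV"
    by (rule Max_in) auto
  then obtain k where k: "Max ((\<lambda>k. E$i$k + E$k$j) ` UNIV) = E$i$k + E$k$j" by blast
  show ?thesis using idem_nth[OF assms, of i j] k by (intro exI[of _ k]) (simp only:)
qed

lemma L1:
  fixes E :: "real^'n::finite^'n"
  assumes "K \<noteq> {}"
  shows "(\<chi> i. Max ((\<lambda>k. a k + E$i$k) ` K)) \<in> trop_span (trop_column E ` K)"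
proof -
  define c where "c = (\<lambda>g. Max (a ` {k\<in>K. trop_column E k = g}))"
  have eq: "Max ((\<lambda>k. a k + E$i$k) ` K) = Max ((\<lambda>g. c g + g$i) ` (trop_column E ` K))" for i
  proof (rule order.antisym)
    show "Max ((\<lambda>k. a k + E$i$k) ` K) \<le> Max ((\<lambda>g. c g + g$i) ` (trop_column E ` K))"
    proof (subst Max_le_iff, simp, simp add: assms, clarify)
      fix k assume k: "k \<in> K"
      have "a k \<le> c (trop_column E k)" unfolding c_def by (rule Max_ge) (use k in auto)
      hence "a k + E$i$k \<le> c (trop_column E k) + trop_column E k $ i"
        by (simp add: trop_column_def)
      also have "\<dots> \<le> Max ((\<lambda>g. c g + g$i) ` (trop_column E ` K))"
        by (rule Max_ge) (use k in auto)
      finally show "a k + E$i$k \<le> Max ((\<lambda>g. c g + g$i) ` (trop_column E ` K))" .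
    qed
    show "Max ((\<lambda>g. c g + g$i) ` (trop_column E ` K)) \<le> Max ((\<lambda>k. a k + E$i$k) ` K)"
    proof (subst Max_le_iff, simp, simp add: assms, clarify)
      fix k0 assume k0: "k0 \<in> K"
      have "c (trop_column E k0) \<in> a ` {k\<in>K. trop_column E k = trop_column E k0}"
        unfolding c_def by (rule Max_in) (use k0 in auto)
      then obtain k1 where k1: "k1 \<in> K" "trop_column E k1 = trop_column E k0"
        "c (trop_column E k0) = a k1" by auto
      have "c (trop_column E k0) + trop_column E k0 $ i = a k1 + E$i$k1"
        using k1 by (metis trop_column_def vec_lambda_beta)
      also have "\<dots> \<le> Max ((\<lambda>k. a k + E$i$k) ` K)" by (rule Max_ge) (use k1 in auto)
      finally show "c (trop_column E k0) + trop_column E k0 $ i \<le> Max ((\<lambda>k. a k + E$i$k) ` K)" .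
    qed
  qed
  show ?thesis unfolding trop_span_def
    by (rule CollectI, rule exI[of _ "trop_column E ` K"], rule exI[of _ c])
       (use assms eq in \<open>auto simp: vec_eq_iff\<close>)
qed

lemma L2:
  fixes E :: "real^'n::finite^'n"
  assumes idem: "trop_idempotent E" and v: "v \<in> trop_colspace E"
  shows "trop_act E v = v"
proof -
  obtain F c where F: "finite F" "F \<noteq> {}" "F \<subseteq> range (trop_column E)"
    and veq: "v = (\<chi> i. Max ((\<lambda>g. c g + g$i) ` F))"
    using v unfolding trop_colspace_def trop_span_def by blast
  have vk: "v$k = Max ((\<lambda>g. c g + g$k) ` F)" for k using veq by simp
  have vge: "c g + E$k$j \<le> v$k" if "g \<in> F" "g = trop_column E j" for g j k
  proof -
    have "c g + g$k \<le> Max ((\<lambda>g. c g + g$k) ` F)" using that F by (intro Max_ge) auto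
    thus ?thesis using that vk by (simp add: trop_column_def)
  qed
  have vex: "\<exists>g\<in>F. \<exists>j. g = trop_column E j \<and> v$k = c g + E$k$j" for k
  proof -
    have "Max ((\<lambda>g. c g + g$k) ` F) \<in> (\<lambda>g. c g + g$k) ` F" using F by (intro Max_in) auto
    then obtain g where g: "g \<in> F" "v$k = c g + g$k" using vk by auto
    then obtain j where "g = trop_column E j" using F by auto
    thus ?thesis using g by (auto simp: trop_column_def)
  qed
  show ?thesis
  proof (subst vec_eq_iff, intro allI)
    fix i
    show "trop_act E v $ i = v $ i" unfolding act_nth
    proof (rule order.antisym)
      show "Max ((\<lambda>k. E$i$k + v$k) ` UNIV) \<le> v$i"
      proof (subst Max_le_iff, simp, simp, clarify)
        fix k
        obtain g j where g: "g \<in> F" "g = trop_column E j" "v$k = c g + E$k$j" using vex[of k] by blast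
        have "E$i$k + v$k = c g + (E$i$k + E$k$j)" using g by simp
        also have "\<dots> \<le> c g + E$i$j" using idem_le[OF idem] by simp
        also have "\<dots> \<le> v$i" using vge g by blast
        finally show "E$i$k + v$k \<le> v$i" .
      qed
      obtain g j where g: "g \<in> F" "g = trop_column E j" "v$i = c g + E$i$j" using vex[of i] by blast
      obtain k0 where k0: "E$i$j = E$i$k0 + E$k0$j" using idem_ex[OF idem] by blast
      have "v$i \<le> E$i$k0 + v$k0" using g k0 vge[OF g(1,2), of k0] by simp
      also have "\<dots> \<le> Max ((\<lambda>k. E$i$k + v$k) ` UNIV)" by (rule Max_ge) auto
      finally show "v$i \<le> Max ((\<lambda>k. E$i$k + v$k) ` UNIV)" .
    qed
  qed
qed

lemma act_in:
  fixes E :: "real^'n::finite^'n"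
  shows "trop_act E x \<in> trop_colspace E"
proof -
  have "(\<chi> i. Max ((\<lambda>k. x$k + E$i$k) ` UNIV)) \<in> trop_span (trop_column E ` UNIV)"
    by (rule L1) auto
  moreover have "(\<chi> i. Max ((\<lambda>k. x$k + E$i$k) ` UNIV)) = trop_act E x"
    by (simp add: trop_act_def add.commute)
  ultimately show ?thesis by (simp add: trop_colspace_def)
qed

lemma act_mono:
  assumes "\<And>k. x$k \<le> z$k"
  shows "trop_act E x $ i \<le> trop_act E z $ i"
  unfolding act_nth
proof (subst Max_le_iff, simp, simp, clarify)
  fix k
  have "E$i$k + x$k \<le> E$i$k + z$k" using assms by simp
  also have "\<dots> \<le> Max ((\<lambda>k. E$i$k + z$k) ` UNIV)" by (rule Max_ge) auto
  finally show "E$i$k + x$k \<le> Max ((\<lambda>k. E$i$k + z$k) ` UNIV)" .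
qed

lemma diag:
  fixes E :: "real^'n::finite^'n"
  assumes idem: "trop_idempotent E" and rk: "trop_rank E = CARD('n)"
  shows "0 \<le> E$j$j"
proof (rule ccontr)
  assume neg: "\<not> 0 \<le> E$j$j"
  obtain m where m: "E$j$j = E$j$m + E$m$j" using idem_ex[OF idem] by blast
  have mj: "m \<noteq> j" using m neg by auto
  define S where "S = UNIV - {j}"
  have Sne: "S \<noteq> {}" using mj S_def by auto
  define G where "G = trop_column E ` S"
  have "trop_span G = trop_colspace E"
  proof
    show "trop_span G \<subseteq> trop_colspace E"
      unfolding trop_colspace_def trop_span_def G_def by blast
    show "trop_colspace E \<subseteq> trop_span G"
    proof
      fix v assume v: "v \<in> trop_colspace E"
      have fix': "\<And>i. Max ((\<lambda>k. E$i$k + v$k) ` UNIV) = v$i"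
        using L2[OF idem v] by (metis act_nth)
      have vS: "v$i = Max ((\<lambda>k. v$k + E$i$k) ` S)" for i
      proof (rule order.antisym)
        have ex: "\<exists>k. v$i = E$i$k + v$k" for i
        proof -
          have "Max ((\<lambda>k. E$i$k + v$k) ` UNIV) \<in> (\<lambda>k. E$i$k + v$k) ` UNIV"
            by (rule Max_in) auto
          thus ?thesis using fix'[of i] by auto
        qed
        obtain k1 where k1: "v$i = E$i$k1 + v$k1" using ex by blast
        show "v$i \<le> Max ((\<lambda>k. v$k + E$i$k) ` S)"
        proof (cases "k1 = j")
          case False
          hence "k1 \<in> S" by (simp add: S_def)
          thus ?thesis using k1 by (intro Max_ge_iff[THEN iffD2]) (auto simp: Sne add.commute)
        next
          case True
          obtain k2 where k2: "v$j = E$j$k2 + v$k2" using ex by blast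
          have "k2 \<noteq> j" using k2 neg by auto
          hence k2S: "k2 \<in> S" by (simp add: S_def)
          have "v$i = E$i$j + E$j$k2 + v$k2" using k1 k2 True by simp
          also have "\<dots> \<le> E$i$k2 + v$k2" using idem_le[OF idem, of i j k2] by simp
          finally show ?thesis using k2S by (intro Max_ge_iff[THEN iffD2]) (auto simp: Sne add.commute)
        qed
        show "Max ((\<lambda>k. v$k + E$i$k) ` S) \<le> v$i"
        proof (subst Max_le_iff, simp, simp add: Sne, clarify)
          fix k
          have "E$i$k + v$k \<le> Max ((\<lambda>k. E$i$k + v$k) ` UNIV)" by (rule Max_ge) auto
          thus "v$k + E$i$k \<le> v$i" using fix'[of i] by simp
        qed
      qed
      have "v = (\<chi> i. Max ((\<lambda>k. v$k + E$i$k) ` S))"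
        unfolding vec_eq_iff vec_lambda_beta by (intro allI vS)
      thus "v \<in> trop_span G" using L1[OF Sne, of "\<lambda>k. v$k" E] G_def by simp
    qed
  qed
  hence "trop_rank E \<le> card G" unfolding trop_rank_def
    by (intro Least_le) (rule exI[of _ G], simp add: G_def)
  also have "card G \<le> card S" unfolding G_def by (rule card_image_le) simp
  also have "card S = CARD('n) - 1" by (simp add: S_def card_Diff_singleton)
  finally show False using rk by (metis One_nat_def diff_less finite_UNIV_card_ge_0 finite
     less_numeral_extra(1) not_less)
qed

theorem lemma7p1:
  fixes E :: "real^'n::finite^'n" and x :: "real^'n"
  assumes "trop_idempotent E"
    and "trop_rank E = CARD('n)"
    and "x \<notin> trop_colspace E"
  shows "trop_act E x \<in> frontier (trop_colspace E)"
proof -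
  define y where "y = trop_act E x"
  have yin: "y \<in> trop_colspace E" unfolding y_def by (rule act_in)
  have yge: "x$k \<le> y$k" for k
  proof -
    have "E$k$k + x$k \<le> Max ((\<lambda>l. E$k$l + x$l) ` UNIV)" by (rule Max_ge) auto
    moreover have "0 \<le> E$k$k" using diag[OF assms(1,2), of k] .
    ultimately have "x$k \<le> Max ((\<lambda>l. E$k$l + x$l) ` UNIV)" by linarith
    thus ?thesis by (simp add: y_def act_nth)
  qed
  have "y \<noteq> x" using yin assms(3) by auto
  then obtain i where i: "x$i < y$i" using yge by (metis order_le_less vec_eq_iff)
  have "y \<notin> interior (trop_colspace E)"
  proof
    assume "y \<in> interior (trop_colspace E)"
    then obtain e where e: "e > 0" "ball y e \<subseteq> trop_colspace E"
      by (meson mem_interior)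
    define d where "d = min (e/2) ((y$i - x$i)/2)"
    have d: "d > 0" "d < e" "d < y$i - x$i" using e i unfolding d_def by (auto simp: min_def)
    define z where "z = y - d *\<^sub>R axis i 1"
    have "dist y z = d" using d by (simp add: z_def dist_norm)
    hence "z \<in> trop_colspace E" using e d by auto
    hence zf: "trop_act E z = z" using L2[OF assms(1)] by blast
    have zge: "x$k \<le> z$k" for k using yge[of k] d by (auto simp: z_def axis_def)
    have "y$i \<le> trop_act E z $ i" unfolding y_def by (rule act_mono) (use zge in auto)
    moreover have "z$i = y$i - d" by (simp add: z_def axis_def)
    ultimately show False using zf d by simp
  qed
  thus ?thesis using yin closure_subset unfolding frontier_def y_def by blast
qed

end
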